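(* Let $f:\mathbb{R}^d\to\mathbb{R}$ be convex and $L$-smooth with a minimizer $x^\star$, and let $x_0\in\mathbb{R}^d$ satisfy $f(x_0)-f(x^\star)\le\Delta_0$. Fix an integer $N\ge1$, let $\theta_N=1$ and, for $k=N-1,\dots,0$, let $\theta_k>0$ satisfy $\theta_k^2-\theta_k=\theta_{k+1}^2$. Let $v_0=\mathbf{0}$ and for $k=0,\dots,N-1$, $$v_{k+1}=v_k+\frac{1}{L\theta_k\theta_{k+1}^2}\nabla f(x_k),\qquad x_{k+1}=x_k-\frac{1}{L}\nabla f(x_k)-(2\theta_{k+1}^3-\theta_{k+1}^2)v_{k+1}.$$ Then the output satisfies $\|\nabla f(x_N)\|^2\le\dfrac{8L\Delta_0}{(N+2)^2}$.
   Context: $L$-smooth means $\|\nabla f(x)-\nabla f(y)\|\le L\|x-y\|$ for all $x,y$; $\|\cdot\|$ is the Euclidean norm. *)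

theory Defs
  imports "HOL-Analysis.Analysis"
begin

definition L_smooth :: "real \<Rightarrow> ('a::euclidean_space \<Rightarrow> 'a) \<Rightarrow> bool" where
  "L_smooth L g \<longleftrightarrow> (\<forall>x y. norm (g x - g y) \<le> L * norm (x - y))"

end

theory Submission
  imports Defs
begin

lemma tangent_ineq:
  fixes f :: "'a::euclidean_space \<Rightarrow> real" and g :: "'a \<Rightarrow> 'a"
  assumes der: "\<And>y. (f has_derivative (\<lambda>h. g y \<bullet> h)) (at y)"
    and cvx: "convex_on UNIV f"
  shows "f x + g x \<bullet> (y - x) \<le> f y"
proof -
  define d where "d = y - x"
  define \<psi> where "\<psi> = (\<lambda>t::real. f (x + t *\<^sub>R d))"
  have cv: "convex_on UNIV \<psi>"
  proof (rule convex_onI)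
    fix t a b :: real assume "0 < t" "t < 1"
    have "x + ((1 - t) * a + t * b) *\<^sub>R d = (1 - t) *\<^sub>R (x + a *\<^sub>R d) + t *\<^sub>R (x + b *\<^sub>R d)"
      by (simp add: algebra_simps)
    then show "\<psi> ((1 - t) *\<^sub>R a + t *\<^sub>R b) \<le> (1 - t) * \<psi> a + t * \<psi> b"
      unfolding \<psi>_def using convex_onD[OF cvx, of t "x + a *\<^sub>R d" "x + b *\<^sub>R d"] \<open>0<t\<close> \<open>t<1\<close>
      by simp
  qed simp
  have "((\<lambda>t::real. x + t *\<^sub>R d) has_derivative (\<lambda>t. t *\<^sub>R d)) (at 0)"
    by (auto intro!: derivative_eq_intros)
  from has_derivative_compose[OF this der]
  have "(\<psi> has_derivative (\<lambda>t. g x \<bullet> (t *\<^sub>R d))) (at 0)"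
    unfolding \<psi>_def by (simp add: o_def)
  then have "(\<psi> has_derivative (\<lambda>t. t * (g x \<bullet> d))) (at 0)"
    by simp
  moreover have "(\<lambda>t::real. t * (g x \<bullet> d)) = (*) (g x \<bullet> d)" by (rule ext) (simp add: mult.commute)
  ultimately have "(\<psi> has_field_derivative (g x \<bullet> d)) (at 0)"
    by (simp add: has_field_derivative_def)
  then have "\<psi> 1 - \<psi> 0 \<ge> (g x \<bullet> d) * (1 - 0)"
    by (intro convex_on_imp_above_tangent[OF cv]) auto
  then show ?thesis unfolding \<psi>_def d_def by simp
qed

lemma descent_ineq:
  fixes f :: "'a::euclidean_space \<Rightarrow> real" and g :: "'a \<Rightarrow> 'a"
  assumes der: "\<And>y. (f has_derivative (\<lambda>h. g y \<bullet> h)) (at y)"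
    and sm: "L_smooth L g"
  shows "f y \<le> f x + g x \<bullet> (y - x) + L / 2 * (norm (y - x))\<^sup>2"
proof -
  define d where "d = y - x"
  define h where "h = (\<lambda>t::real. f (x + t *\<^sub>R d) - t * (g x \<bullet> d) - L / 2 * t\<^sup>2 * (norm d)\<^sup>2)"
  have "h 0 \<ge> h 1"
  proof (rule DERIV_nonpos_imp_nonincreasing[of 0 1 h])
    show "0 \<le> (1::real)" by simp
  next
    fix t :: real assume t: "0 \<le> t" "t \<le> 1"
    have "((\<lambda>t::real. x + t *\<^sub>R d) has_derivative (\<lambda>s. s *\<^sub>R d)) (at t)"
      by (auto intro!: derivative_eq_intros)
    from has_derivative_compose[OF this der]
    have d0: "((\<lambda>t. f (x + t *\<^sub>R d)) has_derivative (\<lambda>s. s * (g (x + t *\<^sub>R d) \<bullet> d))) (at t)"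
      by (simp add: o_def)
    have e: "(\<lambda>s. s * (g (x + t *\<^sub>R d) \<bullet> d)) = (*) (g (x + t *\<^sub>R d) \<bullet> d)" by (rule ext) (simp add: mult.commute)
    have d1: "((\<lambda>t. f (x + t *\<^sub>R d)) has_field_derivative (g (x + t *\<^sub>R d) \<bullet> d)) (at t)"
      using d0 unfolding e has_field_derivative_def .
    have "(h has_field_derivative (g (x + t *\<^sub>R d) \<bullet> d - g x \<bullet> d - L / 2 * (2 * t) * (norm d)\<^sup>2)) (at t)"
      unfolding h_def by (auto intro!: derivative_eq_intros d1)
    moreover have "g (x + t *\<^sub>R d) \<bullet> d - g x \<bullet> d - L / 2 * (2 * t) * (norm d)\<^sup>2 \<le> 0"
    proof -
      have "g (x + t *\<^sub>R d) \<bullet> d - g x \<bullet> d = (g (x + t *\<^sub>R d) - g x) \<bullet> d" by (simp add: inner_diff_left)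
      also have "\<dots> \<le> norm (g (x + t *\<^sub>R d) - g x) * norm d" by (rule norm_cauchy_schwarz)
      also have "\<dots> \<le> (L * norm ((x + t *\<^sub>R d) - x)) * norm d"
        using sm[unfolded L_smooth_def, rule_format, of "x + t *\<^sub>R d" x] by (intro mult_right_mono) simp_all
      also have "\<dots> = L * t * (norm d)\<^sup>2" using t by (simp add: power2_eq_square)
      finally show ?thesis by simp
    qed
    ultimately show "\<exists>y. (h has_real_derivative y) (at t) \<and> y \<le> 0" by blast
  qed
  then show ?thesis unfolding h_def d_def by simp
qed

lemma cocoercive_ineq:
  fixes f :: "'a::euclidean_space \<Rightarrow> real" and g :: "'a \<Rightarrow> 'a"
  assumes der: "\<And>y. (f has_derivative (\<lambda>h. g y \<bullet> h)) (at y)"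
    and cvx: "convex_on UNIV f" and sm: "L_smooth L g" and L: "L > 0"
  shows "f x + g x \<bullet> (y - x) + (norm (g y - g x))\<^sup>2 / (2 * L) \<le> f y"
proof -
  define r where "r = g y - g x"
  define z where "z = y - (1 / L) *\<^sub>R r"
  have 1: "f x + g x \<bullet> (z - x) \<le> f z" by (rule tangent_ineq[OF der cvx])
  have 2: "f z \<le> f y + g y \<bullet> (z - y) + L / 2 * (norm (z - y))\<^sup>2" by (rule descent_ineq[OF der sm])
  have zy: "z - y = - (1 / L) *\<^sub>R r" unfolding z_def by simp
  have "g y \<bullet> (z - y) - g x \<bullet> (z - x) = r \<bullet> (z - y) - g x \<bullet> (y - x)"
    unfolding r_def by (simp add: inner_diff_left inner_diff_right)
  also have "r \<bullet> (z - y) = - (norm r)\<^sup>2 / L" unfolding zy by (simp add: power2_norm_eq_inner)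
  finally have 3: "g y \<bullet> (z - y) - g x \<bullet> (z - x) = - (norm r)\<^sup>2 / L - g x \<bullet> (y - x)" .
  have 4: "L / 2 * (norm (z - y))\<^sup>2 = (norm r)\<^sup>2 / (2 * L)"
    unfolding zy using L by (simp add: power2_eq_square field_simps)
  have "(norm r)\<^sup>2 / (2 * L) = (norm r)\<^sup>2 / L - (norm r)\<^sup>2 / (2 * L)" by (simp add: field_simps)
  then show ?thesis using 1 2 3 4 unfolding r_def[symmetric] by linarith
qed

lemma grad_min_zero:
  fixes f :: "'a::euclidean_space \<Rightarrow> real" and g :: "'a \<Rightarrow> 'a"
  assumes der: "\<And>y. (f has_derivative (\<lambda>h. g y \<bullet> h)) (at y)"
    and sm: "L_smooth L g" and L: "L > 0" and mn: "\<And>y. f xs \<le> f y"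
  shows "g xs = 0"
proof -
  define z where "z = xs - (1 / L) *\<^sub>R g xs"
  have 2: "f z \<le> f xs + g xs \<bullet> (z - xs) + L / 2 * (norm (z - xs))\<^sup>2" by (rule descent_ineq[OF der sm])
  have a: "g xs \<bullet> (z - xs) = - (norm (g xs))\<^sup>2 / L" unfolding z_def by (simp add: power2_norm_eq_inner)
  have b: "L / 2 * (norm (z - xs))\<^sup>2 = (norm (g xs))\<^sup>2 / (2 * L)"
    unfolding z_def using L by (simp add: power2_eq_square field_simps)
  have "f xs \<le> f z" by (rule mn)
  then have "(norm (g xs))\<^sup>2 / L \<le> (norm (g xs))\<^sup>2 / (2 * L)" using 2 a b by linarith
  then have "(norm (g xs))\<^sup>2 \<le> 0" using L by (simp add: field_simps)
  then show ?thesis by simp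
qed

lemma step_identity:
  fixes B Gm G1 GN D :: "'a::real_inner"
  assumes ta: "ta > 0" and tb: "tb > 0" and rec: "ta^2 - ta = tb^2"
    and mu: "\<mu> = 1/(ta*tb^2)" and Ad: "A = B + \<mu> *\<^sub>R Gm" and cbd: "cb = 2*tb^3 - tb^2"
    and cad: "ca = 2*ta^3 - ta^2" and D1d: "D1 = D + Gm + cb *\<^sub>R A"
    and Wad: "Wa = 1/ta^2" and Wbd: "Wb = 1/tb^2"
  shows
  "- Wb * F1 + Wb * FN - A \<bullet> D1 - Wb/2 * (G1 \<bullet> G1) - Wb * cb * (G1 \<bullet> A) - (tb^2-tb)^2 * (A \<bullet> A) + GN \<bullet> A - Wb/2 * (GN \<bullet> GN)
   = (- Wa * Fm + Wa * FN - B \<bullet> D - Wa/2 * (Gm \<bullet> Gm) - Wa * ca * (Gm \<bullet> B) - (ta^2-ta)^2 * (B \<bullet> B) + GN \<bullet> B - Wa/2 * (GN \<bullet> GN))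
     + Wb * (Fm - F1 - G1 \<bullet> (Gm + cb *\<^sub>R A) - 1/2 * ((Gm - G1) \<bullet> (Gm - G1)))
     + \<mu> * (FN - Fm - Gm \<bullet> D - 1/2 * ((GN - Gm) \<bullet> (GN - Gm)))"
proof -
  define hb where "hb = (tb^2-tb)^2"
  define ha where "ha = (ta^2-ta)^2"
  have tbnz: "tb \<noteq> 0" "ta \<noteq> 0" using ta tb by auto
  have tb2: "tb^2 = ta^2 - ta" using rec by simp
  have tb2nz: "ta^2 - ta \<noteq> 0" using tb rec by auto
  have c1: "Wb = Wa + \<mu>"
  proof -
    have "Wa + \<mu> = (tb^2 + ta)/(ta^2*tb^2)" unfolding Wad mu using tbnz by (simp add: field_simps power2_eq_square)
    also have "tb^2 + ta = ta^2" using rec by simp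
    also have "ta^2/(ta^2*tb^2) = Wb" unfolding Wbd using tbnz by simp
    finally show ?thesis by simp
  qed
  have t4: "cb + hb = tb^4" unfolding hb_def cbd by (simp add: power2_eq_square power3_eq_cube algebra_simps  numeral_eq_Suc)
  have "ha = (tb^2)^2" unfolding ha_def rec ..
  also have "\<dots> = tb^4" by (simp flip: power_mult)
  finally have c2: "ha = cb + hb" using t4 by simp
  have c3: "1 + 2 * \<mu> * (cb + hb) = Wa * ca"
  proof -
    have "cb + hb = tb^4" unfolding hb_def cbd by (simp add: power2_eq_square power3_eq_cube algebra_simps  numeral_eq_Suc)
    then have "2 * \<mu> * (cb + hb) = 2 * tb^2 / ta" unfolding mu using tbnz
      by (simp add: field_simps power2_eq_square numeral_eq_Suc)
    also have "\<dots> = 2 * ta - 2" using tbnz rec[symmetric] by (simp add: field_simps power2_eq_square)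
    also have "Wa * ca = 2 * ta - 1" unfolding Wad cad using tbnz by (simp add: field_simps power2_eq_square power3_eq_cube)
    ultimately show ?thesis by simp
  qed
  have c4: "\<mu> + \<mu>^2 * (cb + hb) = Wb"
  proof -
    have "cb + hb = tb^4" unfolding hb_def cbd by (simp add: power2_eq_square power3_eq_cube algebra_simps  numeral_eq_Suc)
    then have "\<mu> + \<mu>^2 * (cb + hb) = 1/(ta*tb^2) + 1/ta^2" unfolding mu using tbnz
      by (simp add: field_simps power2_eq_square numeral_eq_Suc)
    also have "\<dots> = (ta + tb^2)/(ta^2*tb^2)" using tbnz by (simp add: field_simps power2_eq_square)
    also have "\<dots> = 1/tb^2" using tbnz rec[symmetric] by (simp add: field_simps power2_eq_square)
    finally show ?thesis unfolding Wbd .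
  qed
  have e1: "A \<bullet> D1 = B \<bullet> D + \<mu> * (Gm \<bullet> D) + (B \<bullet> Gm) + \<mu> * (Gm \<bullet> Gm) + cb * ((B \<bullet> B) + 2 * \<mu> * (B \<bullet> Gm) + \<mu>^2 * (Gm \<bullet> Gm))"
    unfolding D1d Ad by (simp add: inner_add_left inner_add_right inner_commute[of Gm B] power2_eq_square algebra_simps)
  have e2: "G1 \<bullet> A = G1 \<bullet> B + \<mu> * (G1 \<bullet> Gm)" unfolding Ad by (simp add: inner_add_right)
  have e3: "A \<bullet> A = B \<bullet> B + 2 * \<mu> * (B \<bullet> Gm) + \<mu>^2 * (Gm \<bullet> Gm)"
    unfolding Ad by (simp add: inner_add_left inner_add_right inner_commute[of Gm B] power2_eq_square algebra_simps)
  have e4: "GN \<bullet> A = GN \<bullet> B + \<mu> * (GN \<bullet> Gm)" unfolding Ad by (simp add: inner_add_right)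
  have e5: "G1 \<bullet> (Gm + cb *\<^sub>R A) = G1 \<bullet> Gm + cb * (G1 \<bullet> B) + cb * \<mu> * (G1 \<bullet> Gm)"
    unfolding Ad by (simp add: inner_add_right algebra_simps)
  have e6: "(Gm - G1) \<bullet> (Gm - G1) = Gm \<bullet> Gm - 2 * (G1 \<bullet> Gm) + G1 \<bullet> G1"
    by (simp add: inner_diff_left inner_diff_right inner_commute[of Gm G1])
  have e7: "(GN - Gm) \<bullet> (GN - Gm) = GN \<bullet> GN - 2 * (GN \<bullet> Gm) + Gm \<bullet> Gm"
    by (simp add: inner_diff_left inner_diff_right inner_commute[of Gm GN])
  have e8: "Gm \<bullet> B = B \<bullet> Gm" by (rule inner_commute)
  have wc: "Wa * ca * (B \<bullet> Gm) = (1 + 2 * \<mu> * (cb + hb)) * (B \<bullet> Gm)" using c3 by simp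
  have wa: "Wa = \<mu>^2 * (cb + hb)" using c4 c1 by simp
  show ?thesis
    unfolding e1 e2 e3 e4 e5 e6 e7 e8 hb_def[symmetric] ha_def[symmetric] wc c2 c1
    unfolding wa by (simp add: field_simps power2_eq_square)
qed
lemma theta_lower:
  fixes \<theta> :: "nat \<Rightarrow> real"
  assumes theta_N: "\<theta> N = 1"
    and theta_pos: "\<And>k. k < N \<Longrightarrow> \<theta> k > 0"
    and theta_rec: "\<And>k. k < N \<Longrightarrow> (\<theta> k)\<^sup>2 - \<theta> k = (\<theta> (Suc k))\<^sup>2"
  shows "j \<le> N \<Longrightarrow> \<theta> (N - j) \<ge> (real j + 2) / 2"
proof (induction j)
  case 0 then show ?case using theta_N by simp
next
  case (Suc j)
  define k where "k = N - Suc j"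
  have kN: "k < N" and sk: "Suc k = N - j" using Suc.prems unfolding k_def by auto
  have ih: "\<theta> (Suc k) \<ge> (real j + 2) / 2" using Suc sk by simp
  have r: "(\<theta> k)\<^sup>2 - \<theta> k = (\<theta> (Suc k))\<^sup>2" using theta_rec kN by simp
  have p: "\<theta> k > 0" using theta_pos kN by simp
  have p1: "\<theta> (Suc k) > 0" proof - have "(real j + 2) / 2 > 0" by simp then show ?thesis using ih by linarith qed
  have ge1: "\<theta> k \<ge> 1"
  proof (rule ccontr)
    assume "\<not> 1 \<le> \<theta> k"
    then have "(\<theta> k)\<^sup>2 - \<theta> k < 0" using p by (simp add: power2_eq_square mult_less_cancel_right1 algebra_simps)
    then show False using r by (smt (verit) zero_le_power2)
  qed
  have "\<theta> k \<ge> \<theta> (Suc k) + 1/2"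
  proof (rule ccontr)
    assume a: "\<not> ?thesis"
    have "(\<theta> k - 1/2)^2 < (\<theta> (Suc k))^2"
      using a ge1 p1 by (intro power_strict_mono) auto
    moreover have "(\<theta> k - 1/2)^2 = (\<theta> (Suc k))^2 + 1/4" using r by (simp add: power2_eq_square algebra_simps)
    ultimately show False by simp
  qed
  then show ?case using ih unfolding k_def by simp
qed
theorem theorem1:
  fixes f :: "'a::euclidean_space \<Rightarrow> real"
    and grad :: "'a \<Rightarrow> 'a"
    and L \<Delta>0 :: real
    and xstar x0 :: 'a
    and N :: nat
    and \<theta> :: "nat \<Rightarrow> real"
    and x v :: "nat \<Rightarrow> 'a"
  assumes L_pos: "L > 0"
    and grad: "\<And>y. (f has_derivative (\<lambda>h. grad y \<bullet> h)) (at y)"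
    and cvx: "convex_on UNIV f"
    and smooth: "L_smooth L grad"
    and minimizer: "\<And>y. f xstar \<le> f y"
    and init_gap: "f x0 - f xstar \<le> \<Delta>0"
    and N_ge: "N \<ge> 1"
    and theta_N: "\<theta> N = 1"
    and theta_pos: "\<And>k. k < N \<Longrightarrow> \<theta> k > 0"
    and theta_rec: "\<And>k. k < N \<Longrightarrow> (\<theta> k)\<^sup>2 - \<theta> k = (\<theta> (Suc k))\<^sup>2"
    and x_0: "x 0 = x0"
    and v_0: "v 0 = 0"
    and v_step: "\<And>k. k < N \<Longrightarrow>
        v (Suc k) = v k + (1 / (L * \<theta> k * (\<theta> (Suc k))\<^sup>2)) *\<^sub>R grad (x k)"
    and x_step: "\<And>k. k < N \<Longrightarrow>
        x (Suc k) = x k - (1 / L) *\<^sub>R grad (x k)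
                    - (2 * (\<theta> (Suc k))^3 - (\<theta> (Suc k))\<^sup>2) *\<^sub>R v (Suc k)"
  shows "(norm (grad (x N)))\<^sup>2 \<le> 8 * L * \<Delta>0 / (real N + 2)\<^sup>2"
  proof -
  define G where "G k = (1/L) *\<^sub>R grad (x k)" for k
  define F where "F k = f (x k) / L" for k
  define Fs where "Fs = f xstar / L"
  define W where "W k = 1 / (\<theta> k)\<^sup>2" for k
  define mu where "mu k = 1 / (\<theta> k * (\<theta> (Suc k))\<^sup>2)" for k
  define c where "c k = 2 * (\<theta> k)^3 - (\<theta> k)\<^sup>2" for k
  define P where "P m = - W m * F m + W m * F N - v m \<bullet> (x N - x m) - W m/2 * (G m \<bullet> G m)
      - W m * c m * (G m \<bullet> v m) - ((\<theta> m)\<^sup>2 - \<theta> m)\<^sup>2 * (v m \<bullet> v m) + G N \<bullet> v m - W m/2 * (G N \<bullet> G N)" for m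
  define C where "C = 2 * W 0 * F 0 - W 0 * Fs - W 0 * F N + W 0/2 * (G N \<bullet> G N)"
  have Qs: "f p / L - f q / L - ((1/L) *\<^sub>R grad q) \<bullet> (p - q)
      - 1/2 * (((1/L) *\<^sub>R grad p - (1/L) *\<^sub>R grad q) \<bullet> ((1/L) *\<^sub>R grad p - (1/L) *\<^sub>R grad q)) \<ge> 0" for p q
  proof -
    have co: "f q + grad q \<bullet> (p - q) + (norm (grad p - grad q))\<^sup>2 / (2 * L) \<le> f p"
      by (rule cocoercive_ineq[OF grad cvx smooth L_pos])
    have e: "((1/L) *\<^sub>R grad p - (1/L) *\<^sub>R grad q) \<bullet> ((1/L) *\<^sub>R grad p - (1/L) *\<^sub>R grad q)
        = (norm (grad p - grad q))\<^sup>2 / L^2"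
      by (simp add: power2_norm_eq_inner flip: scaleR_diff_right) (simp add: power2_eq_square)
    have e2: "((1/L) *\<^sub>R grad q) \<bullet> (p - q) = (grad q \<bullet> (p - q)) / L" by simp
    have "0 \<le> (f p - (f q + grad q \<bullet> (p - q) + (norm (grad p - grad q))\<^sup>2 / (2 * L))) / L"
      using co L_pos by simp
    also have "\<dots> = f p / L - f q / L - (grad q \<bullet> (p - q)) / L - 1/2 * ((norm (grad p - grad q))\<^sup>2 / L^2)"
      using L_pos by (simp add: field_simps power2_eq_square)
    finally show ?thesis unfolding e e2 .
  qed
  have gs: "grad xstar = 0" by (rule grad_min_zero[OF grad smooth L_pos minimizer])
  have Q1: "F i - F j - G j \<bullet> (x i - x j) - 1/2 * ((G i - G j) \<bullet> (G i - G j)) \<ge> 0" for i j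
    using Qs[of "x i" "x j"] unfolding F_def G_def .
  have Q2: "F i - Fs - 1/2 * (G i \<bullet> G i) \<ge> 0" for i
    using Qs[of "x i" xstar] unfolding F_def G_def Fs_def gs by simp
  have tpos: "\<theta> k > 0" if "k \<le> N" for k
    using theta_pos[of k] theta_N that by (cases "k = N") auto
  have inv: "0 \<le> C + P m" if "m \<le> N" for m
    using that
  proof (induction m)
    case 0
    have "C + P 0 = W 0 * (F 0 - Fs - 1/2 * (G 0 \<bullet> G 0))"
      unfolding C_def P_def v_0 by (simp add: algebra_simps)
    also have "\<dots> \<ge> 0" using Q2[of 0] unfolding W_def by simp
    finally show ?case .
  next
    case (Suc m)
    have mN: "m < N" using Suc.prems by simp
    have ih: "0 \<le> C + P m" using Suc mN by simp
    have ta: "\<theta> m > 0" and tb: "\<theta> (Suc m) > 0" using tpos mN by auto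
    have vS: "v (Suc m) = v m + mu m *\<^sub>R G m"
      using v_step[OF mN] unfolding mu_def G_def by simp
    have xS: "x N - x (Suc m) = (x N - x m) + G m + c (Suc m) *\<^sub>R v (Suc m)"
      using x_step[OF mN] unfolding c_def G_def by (simp add: algebra_simps)
    have xS2: "x m - x (Suc m) = G m + c (Suc m) *\<^sub>R v (Suc m)"
      using x_step[OF mN] unfolding c_def G_def by (simp add: algebra_simps)
    have id: "P (Suc m) = P m + W (Suc m) * (F m - F (Suc m) - G (Suc m) \<bullet> (G m + c (Suc m) *\<^sub>R v (Suc m)) - 1/2 * ((G m - G (Suc m)) \<bullet> (G m - G (Suc m))))
       + mu m * (F N - F m - G m \<bullet> (x N - x m) - 1/2 * ((G N - G m) \<bullet> (G N - G m)))"
      unfolding P_def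
      by (rule step_identity[OF ta tb theta_rec[OF mN] mu_def vS c_def c_def xS W_def W_def])
    have q1: "0 \<le> F m - F (Suc m) - G (Suc m) \<bullet> (G m + c (Suc m) *\<^sub>R v (Suc m)) - 1/2 * ((G m - G (Suc m)) \<bullet> (G m - G (Suc m)))"
      using Q1[of m "Suc m"] unfolding xS2 .
    have q2: "0 \<le> F N - F m - G m \<bullet> (x N - x m) - 1/2 * ((G N - G m) \<bullet> (G N - G m))"
      using Q1[of N m] .
    have "W (Suc m) \<ge> 0" "mu m \<ge> 0" unfolding W_def mu_def using ta tb by auto
    then show ?case unfolding id using ih q1 q2
      by (smt (verit) mult_nonneg_nonneg)
  qed
  have PN: "P N = - (G N \<bullet> G N)"
    unfolding P_def W_def c_def theta_N by simp
  have fin: "0 \<le> 2 * W 0 * (F 0 - Fs) - G N \<bullet> G N"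
  proof -
    have "0 \<le> C + P N" using inv by simp
    moreover have "0 \<le> W 0 * (F N - Fs - 1/2 * (G N \<bullet> G N))" using Q2[of N] unfolding W_def by simp
    ultimately show ?thesis unfolding PN C_def by (simp add: algebra_simps)
  qed
  have t0: "\<theta> 0 \<ge> (real N + 2) / 2" using theta_lower[OF theta_N theta_pos theta_rec, of N] by simp
  have D0: "0 \<le> \<Delta>0" using init_gap minimizer[of x0] by simp
  have gN: "(norm (grad (x N)))\<^sup>2 = L^2 * (G N \<bullet> G N)"
    unfolding G_def power2_norm_eq_inner using L_pos by (simp add: field_simps power2_eq_square)
  have "G N \<bullet> G N \<le> 2 * (f x0 - f xstar) / (L * (\<theta> 0)\<^sup>2)"
    using fin tpos[of 0] L_pos unfolding W_def F_def Fs_def x_0 by (simp add: field_simps)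
  then have "(norm (grad (x N)))\<^sup>2 \<le> L^2 * (2 * (f x0 - f xstar) / (L * (\<theta> 0)\<^sup>2))"
    unfolding gN using L_pos by (intro mult_left_mono) auto
  also have "\<dots> = 2 * L * (f x0 - f xstar) / (\<theta> 0)\<^sup>2" using L_pos tpos[of 0] by (simp add: power2_eq_square field_simps)
  also have "\<dots> \<le> 2 * L * \<Delta>0 / (\<theta> 0)\<^sup>2"
    using init_gap L_pos by (intro divide_right_mono mult_left_mono) auto
  also have "\<dots> \<le> 2 * L * \<Delta>0 / ((real N + 2) / 2)\<^sup>2"
  proof (rule divide_left_mono)
    show "((real N + 2) / 2)\<^sup>2 \<le> (\<theta> 0)\<^sup>2" using t0 by (intro power_mono) auto
  qed (use L_pos D0 tpos[of 0] in auto)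
  also have "\<dots> = 8 * L * \<Delta>0 / (real N + 2)\<^sup>2" by (simp add: power2_eq_square field_simps)
  finally show ?thesis .
qed

end
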